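(* Fix integers $s \geq 2$ and $q \ge 1$, and let $\mathcal{F} \subseteq Z_s^q$ be a $\{0,1\}$-covering family of vectors. Then $|\mathcal{F}| \leq 2^{q-1}$. For $s=2$ equality can be attained, i.e. there is a $\{0,1\}$-covering family in $Z_2^q$ of size $2^{q-1}$.
   Context: Let $Z_s$ be the ring of integers modulo $s$. For $A \subseteq Z_s$, a vector $v=(v_1,\dots,v_q)\in Z_s^q$ is $A$-covering if for every $a \in A$ there is $1 \le i \le q$ with $v_i = a$. A family $\mathcal{F} \subseteq Z_s^q$ is $A$-covering if for every ordered pair of distinct vectors $u,v \in \mathcal{F}$ the difference $u-v$ is $A$-covering. *)

theory Defs
  imports Main
begin

text \<open>Elements of Z_s are represented by naturals in {0..<s}; a vector in Z_s^q is a
function nat \<Rightarrow> nat with coordinates 0..q-1 in {0..<s} and zero outside (canonical form).\<close>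

definition zvecs :: "nat \<Rightarrow> nat \<Rightarrow> (nat \<Rightarrow> nat) set" where
  "zvecs s q = {v. (\<forall>i<q. v i < s) \<and> (\<forall>i\<ge>q. v i = 0)}"

definition zdiff :: "nat \<Rightarrow> nat \<Rightarrow> (nat \<Rightarrow> nat) \<Rightarrow> (nat \<Rightarrow> nat) \<Rightarrow> (nat \<Rightarrow> nat)" where
  "zdiff s q u v = (\<lambda>i. if i < q then (u i + s - v i) mod s else 0)"

definition A_covering_vec :: "nat \<Rightarrow> nat set \<Rightarrow> (nat \<Rightarrow> nat) \<Rightarrow> bool" where
  "A_covering_vec q A v \<longleftrightarrow> (\<forall>a\<in>A. \<exists>i<q. v i = a)"

definition A_covering_family :: "nat \<Rightarrow> nat \<Rightarrow> nat set \<Rightarrow> (nat \<Rightarrow> nat) set \<Rightarrow> bool" where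
  "A_covering_family s q A F \<longleftrightarrow>
     (\<forall>u\<in>F. \<forall>v\<in>F. u \<noteq> v \<longrightarrow> A_covering_vec q A (zdiff s q u v))"

end

theory Submission
  imports Defs Complex_Main "HOL-Library.Function_Algebras"
begin

lemma fsum_apply: "(sum f A) x = sum (\<lambda>a. f a x) A"
  by (induction A rule: infinite_finite_induct) auto

interpretation FS: vector_space "(\<lambda>c (f::(nat\<Rightarrow>nat)\<Rightarrow>real) x. c * f x)"
  by unfold_locales (auto simp: fun_eq_iff algebra_simps)

definition monom_fn :: "nat set \<Rightarrow> (nat\<Rightarrow>nat) \<Rightarrow> real" where
  "monom_fn S x = (\<Prod>i\<in>S. real (x i))"

lemma prod_in_span:
  fixes c :: "nat \<Rightarrow> real"
  shows "(\<lambda>x. \<Prod>i<q. real (x i) - c i) \<in> FS.span (monom_fn ` Pow {..<q})"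
proof -
  have eq: "(\<lambda>x. \<Prod>i<q. real (x i) - c i)
      = (\<Sum>X\<in>Pow {..<q}. (\<lambda>x. (\<Prod>i\<in>{..<q}-X. - c i) * monom_fn X x))"
  proof (rule ext)
    fix x
    have "(\<Prod>i<q. real (x i) - c i) = (\<Prod>i<q. real (x i) + (- c i))" by simp
    also have "\<dots> = (\<Sum>X\<in>Pow {..<q}. (\<Prod>i\<in>X. real (x i)) * (\<Prod>i\<in>{..<q}-X. - c i))"
      by (rule prod_add) simp
    finally show "(\<Prod>i<q. real (x i) - c i)
      = (\<Sum>X\<in>Pow {..<q}. (\<lambda>x. (\<Prod>i\<in>{..<q}-X. - c i) * monom_fn X x)) x"
      by (simp add: fsum_apply monom_fn_def mult.commute)
  qed
  show ?thesis
    unfolding eq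
    by (intro FS.span_sum FS.span_scale[where c="(\<Prod>i\<in>{..<q}-X. - c i)" for X, simplified]
          FS.span_base) auto
qed

lemma succ_ne: "2 \<le> (s::nat) \<Longrightarrow> b < s \<Longrightarrow> (b + 1) mod s \<noteq> b"
proof (cases "b + 1 < s")
  case True then show ?thesis by simp
next
  case False
  assume a: "2 \<le> s" "b < s"
  then have e: "b + 1 = s" using False by linarith
  then have "(b + 1) mod s = 0" by simp
  then show ?thesis using e a by linarith
qed
lemma zd0: "a < s \<Longrightarrow> b < (s::nat) \<Longrightarrow> (a + s - b) mod s = 0 \<Longrightarrow> a = b"
proof (cases "b \<le> a")
  case True
  assume h: "a < s" "b < s" "(a + s - b) mod s = 0"
  have e: "a + s - b = (a - b) + s" using True by linarith
  have "(a + s - b) mod s = a - b" unfolding e using h(1) by (simp add: mod_add_self2)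
  then show ?thesis using h(3) True by linarith
next
  case False
  assume h: "a < s" "b < s" "(a + s - b) mod s = 0"
  have "a + s - b < s" using False h by linarith
  then have "(a + s - b) mod s = a + s - b" by (rule mod_less)
  then show ?thesis using h False by linarith
qed
lemma zd1: "a < s \<Longrightarrow> b < (s::nat) \<Longrightarrow> (a + s - b) mod s = 1 \<Longrightarrow> a = (b + 1) mod s"
proof (cases "b \<le> a")
  case True
  assume h: "a < s" "b < s" "(a + s - b) mod s = 1"
  have e: "a + s - b = (a - b) + s" using True by linarith
  have "(a + s - b) mod s = a - b" unfolding e using h(1) by (simp add: mod_add_self2)
  then have "a = b + 1" using h(3) True by linarith
  then show ?thesis using h(1) by simp
next
  case False
  assume h: "a < s" "b < s" "(a + s - b) mod s = 1"
  have "a + s - b < s" using False h by linarith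
  then have "(a + s - b) mod s = a + s - b" by (rule mod_less)
  then have "a + s - b = 1" using h by linarith
  then have "a = 0" "b + 1 = s" using False h by linarith+
  then show ?thesis by simp
qed

lemma cov_facts:
  assumes FZ: "F \<subseteq> zvecs s q" and cov: "A_covering_family s q {0, 1} F"
    and u: "u \<in> F" and v: "v \<in> F" and uv: "u \<noteq> v"
  shows "\<exists>i<q. u i = v i" and "\<exists>i<q. u i = (v i + 1) mod s"
proof -
  have c: "A_covering_vec q {0,1} (zdiff s q u v)"
    using cov u v uv unfolding A_covering_family_def by blast
  have us: "\<And>i. i < q \<Longrightarrow> u i < s" and vs: "\<And>i. i < q \<Longrightarrow> v i < s"
    using FZ u v unfolding zvecs_def by auto
  from c obtain i where i: "i < q" "zdiff s q u v i = 0"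
    unfolding A_covering_vec_def by auto
  then have "(u i + s - v i) mod s = 0" unfolding zdiff_def by simp
  then have "u i = v i" by (rule zd0[OF us[OF i(1)] vs[OF i(1)]])
  then show "\<exists>i<q. u i = v i" using i(1) by blast
  from c obtain j where j: "j < q" "zdiff s q u v j = 1"
    unfolding A_covering_vec_def by auto
  then have "(u j + s - v j) mod s = 1" unfolding zdiff_def by simp
  then have "u j = (v j + 1) mod s" by (rule zd1[OF us[OF j(1)] vs[OF j(1)]])
  then show "\<exists>i<q. u i = (v i + 1) mod s" using j(1) by blast
qed

lemma bound:
  assumes s2: "s \<ge> 2" and q1: "q \<ge> 1" and FZ: "F \<subseteq> zvecs s q"
    and cov: "A_covering_family s q {0, 1} F"
  shows "card F \<le> 2 ^ (q - 1)"
proof (cases "finite F")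
  case False then show ?thesis by simp
next
  case fin: True
  have vs: "\<And>v i. v \<in> F \<Longrightarrow> i < q \<Longrightarrow> v i < s" using FZ unfolding zvecs_def by auto
  have E: "\<And>u v. u \<in> F \<Longrightarrow> v \<in> F \<Longrightarrow> u \<noteq> v \<Longrightarrow> \<exists>i<q. u i = v i"
    using cov_facts(1)[OF FZ cov] by blast
  have P: "\<And>u v. u \<in> F \<Longrightarrow> v \<in> F \<Longrightarrow> u \<noteq> v \<Longrightarrow> \<exists>i<q. u i = (v i + 1) mod s"
    using cov_facts(2)[OF FZ cov] by blast
  have q0: "0 < q" using q1 by simp
  define fv where "fv v = (\<lambda>x::nat\<Rightarrow>nat. \<Prod>i<q. real (x i) - real ((v i + 1) mod s))" for v :: "nat\<Rightarrow>nat"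
  define gw where "gw w = (\<lambda>x::nat\<Rightarrow>nat. \<Prod>i<q. real (x i) - real (w i))" for w :: "nat\<Rightarrow>nat"
  define p where "p v = (\<lambda>i. (v i + 1) mod s)" for v :: "nat\<Rightarrow>nat"
  have f1: "fv v u = 0" if af1: "u \<in> F" "v \<in> F" "u \<noteq> v" for u v
  proof -
    obtain i where "i < q" "u i = (v i + 1) mod s" using P[OF af1] by blast
    then show ?thesis unfolding fv_def by (intro prod_zero bexI[of _ i]) auto
  qed
  have f2: "fv v v \<noteq> 0" if af2: "v \<in> F" for v
  proof -
    have "\<forall>i\<in>{..<q}. real (v i) - real ((v i + 1) mod s) \<noteq> 0"
      using succ_ne[OF s2 vs[OF af2]] by force
    then show ?thesis unfolding fv_def by (simp add: prod_zero_iff)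
  qed
  have f3: "fv w (p v) = 0" if af3: "w \<in> F" "v \<in> F" for w v
  proof -
    obtain i where "i < q" "v i = w i"
      using E[OF af3(2,1)] q0 by (cases "v = w") auto
    then show ?thesis unfolding fv_def p_def by (intro prod_zero bexI[of _ i]) auto
  qed
  have g1: "gw w u = 0" if ag1: "w \<in> F" "u \<in> F" for w u
  proof -
    obtain i where "i < q" "u i = w i"
      using E[OF ag1(2,1)] q0 by (cases "u = w") auto
    then show ?thesis unfolding gw_def by (intro prod_zero bexI[of _ i]) auto
  qed
  have g2: "gw w (p v) = 0" if ag2: "w \<in> F" "v \<in> F" "v \<noteq> w" for w v
  proof -
    obtain i where "i < q" "w i = (v i + 1) mod s" using P[OF ag2(1,2)] ag2(3) by metis
    then show ?thesis unfolding gw_def p_def by (intro prod_zero bexI[of _ i]) auto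
  qed
  have g3: "gw w (p w) \<noteq> 0" if ag3: "w \<in> F" for w
  proof -
    have "\<forall>i\<in>{..<q}. real ((w i + 1) mod s) - real (w i) \<noteq> 0"
      using succ_ne[OF s2 vs[OF ag3]] by force
    then show ?thesis unfolding gw_def p_def by (simp add: prod_zero_iff)
  qed
  define S where "S = fv ` F \<union> gw ` F"
  define T where "T = monom_fn ` Pow {..<q}"
  have ST: "S \<subseteq> FS.span T"
  proof
    fix h assume "h \<in> S"
    then consider v where "h = fv v" | w where "h = gw w" unfolding S_def by blast
    then show "h \<in> FS.span T"
    proof cases
      case (1 v) then show ?thesis unfolding T_def fv_def
        using prod_in_span[where q=q and c="\<lambda>i. real ((v i + 1) mod s)"] by simp
    next
      case (2 w) then show ?thesis unfolding T_def gw_def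
        using prod_in_span[where q=q and c="\<lambda>i. real (w i)"] by simp
    qed
  qed
  have ind: "FS.independent S"
    unfolding FS.independent_explicit_module
  proof (intro allI impI)
    fix t u h
    assume t: "finite t" "t \<subseteq> S" and z: "(\<Sum>v\<in>t. (\<lambda>x. u v * v x)) = 0" and h: "h \<in> t"
    have zx: "(\<Sum>v\<in>t. u v * v x) = 0" for x
      using fun_cong[OF z, of x] by (simp add: fsum_apply)
    have single: "u h = 0" if hx: "h x \<noteq> 0" and oth: "\<And>h'. h' \<in> t \<Longrightarrow> h' \<noteq> h \<Longrightarrow> h' x = 0" for x
    proof -
      have "(\<Sum>v\<in>t. u v * v x) = u h * h x + (\<Sum>v\<in>t-{h}. u v * v x)"
        by (rule sum.remove[OF t(1) h])
      also have "(\<Sum>v\<in>t-{h}. u v * v x) = 0"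
        by (rule sum.neutral) (simp add: oth)
      finally have "u h * h x = 0" using zx[of x] by simp
      with hx show ?thesis by simp
    qed
    from h t(2) have "h \<in> S" by blast
    then consider v where "v \<in> F" "h = fv v" | w where "w \<in> F" "h = gw w"
      unfolding S_def by blast
    then show "u h = 0"
    proof cases
      case (1 v)
      show ?thesis
      proof (rule single[of v])
        show "h v \<noteq> 0" using f2 1 by simp
        fix h' assume h': "h' \<in> t" "h' \<noteq> h"
        then have "h' \<in> S" using t(2) by blast
        then consider v' where "v' \<in> F" "h' = fv v'" | w' where "w' \<in> F" "h' = gw w'"
          unfolding S_def by blast
        then show "h' v = 0"
        proof cases
          case (1 v')
          then have "v \<noteq> v'" using h'(2) \<open>h = fv v\<close> by blast
          then show ?thesis using f1[of v v'] 1 \<open>v \<in> F\<close> by simp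
        next
          case (2 w')
          then show ?thesis using g1[of w' v] \<open>v \<in> F\<close> by simp
        qed
      qed
    next
      case (2 w)
      show ?thesis
      proof (rule single[of "p w"])
        show "h (p w) \<noteq> 0" using g3 2 by simp
        fix h' assume h': "h' \<in> t" "h' \<noteq> h"
        then have "h' \<in> S" using t(2) by blast
        then consider v' where "v' \<in> F" "h' = fv v'" | w' where "w' \<in> F" "h' = gw w'"
          unfolding S_def by blast
        then show "h' (p w) = 0"
        proof cases
          case (1 v')
          then show ?thesis using f3[of v' w] \<open>w \<in> F\<close> by simp
        next
          case (2 w')
          then have "w \<noteq> w'" using h'(2) \<open>h = gw w\<close> by blast
          then show ?thesis using g2[of w' w] 2 \<open>w \<in> F\<close> by simp
        qed
      qed
    qed
  qed
  have finT: "finite T" unfolding T_def by simp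
  have cST: "card S \<le> card T"
    using FS.independent_span_bound[OF finT ind ST] by simp
  have cT: "card T \<le> 2 ^ q"
    unfolding T_def using card_image_le[of "Pow {..<q}" monom_fn] by (simp add: card_Pow)
  have injf: "inj_on fv F"
  proof (rule inj_onI)
    fix v v' assume a: "v \<in> F" "v' \<in> F" "fv v = fv v'"
    show "v = v'"
    proof (rule ccontr)
      assume "v \<noteq> v'"
      then have "fv v' v = 0" using f1[of v v'] a by simp
      then show False using f2[of v] a by simp
    qed
  qed
  have injg: "inj_on gw F"
  proof (rule inj_onI)
    fix w w' assume a: "w \<in> F" "w' \<in> F" "gw w = gw w'"
    show "w = w'"
    proof (rule ccontr)
      assume "w \<noteq> w'"
      then have "gw w' (p w) = 0" using g2[of w' w] a by simp
      then show False using g3[of w] a by simp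
    qed
  qed
  have disj: "fv ` F \<inter> gw ` F = {}"
  proof (rule ccontr)
    assume "fv ` F \<inter> gw ` F \<noteq> {}"
    then obtain v w where a: "v \<in> F" "w \<in> F" "fv v = gw w" by blast
    then have "gw w v = 0" using g1[of w v] by simp
    then show False using f2[of v] a by simp
  qed
  have "card S = card F + card F"
    unfolding S_def using card_Un_disjoint[OF finite_imageI[OF fin] finite_imageI[OF fin] disj]
      card_image[OF injf] card_image[OF injg] by simp
  then have "2 * card F \<le> 2 ^ q" using cST cT by linarith
  moreover have "(2::nat) ^ q = 2 * 2 ^ (q - 1)" using q0 by (cases q) auto
  ultimately show ?thesis by linarith
qed

lemma exist2:
  assumes q1: "q \<ge> 1"
  shows "\<exists>F. F \<subseteq> zvecs 2 q \<and> A_covering_family 2 q {0, 1} F \<and> card F = 2 ^ (q - 1)"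
proof -
  define ch where "ch S = (\<lambda>i::nat. if i \<in> S then 1 else (0::nat))" for S :: "nat set"
  define F where "F = ch ` Pow {1..<q}"
  have inj: "inj_on ch (Pow {1..<q})"
  proof (rule inj_onI)
    fix S T assume "S \<in> Pow {1..<q}" "T \<in> Pow {1..<q}" "ch S = ch T"
    have "i \<in> S \<longleftrightarrow> i \<in> T" for i
      using fun_cong[OF \<open>ch S = ch T\<close>, of i] unfolding ch_def by (auto split: if_splits)
    then show "S = T" by blast
  qed
  have card: "card F = 2 ^ (q - 1)"
    unfolding F_def using card_image[OF inj] by (simp add: card_Pow)
  have sub: "F \<subseteq> zvecs 2 q"
    unfolding F_def zvecs_def ch_def by auto
  have cov: "A_covering_family 2 q {0, 1} F"
    unfolding A_covering_family_def
  proof (intro ballI impI)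
    fix u v assume "u \<in> F" "v \<in> F" "u \<noteq> v"
    then obtain S T where S: "S \<subseteq> {1..<q}" "u = ch S" and T: "T \<subseteq> {1..<q}" "v = ch T"
      unfolding F_def by blast
    have "S \<noteq> T" using \<open>u \<noteq> v\<close> S T by blast
    then obtain i where i: "i \<in> S \<and> i \<notin> T \<or> i \<in> T \<and> i \<notin> S" by blast
    then have iq: "i < q" using S T by auto
    have z0: "zdiff 2 q u v 0 = 0"
      using S T q1 unfolding zdiff_def ch_def by auto
    have z1: "zdiff 2 q u v i = 1"
      using i iq S(2) T(2) unfolding zdiff_def ch_def by auto
    show "A_covering_vec q {0, 1} (zdiff 2 q u v)"
      unfolding A_covering_vec_def
    proof
      fix a :: nat assume "a \<in> {0, 1}"
      then have "a = 0 \<or> a = 1" by simp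
      then show "\<exists>i<q. zdiff 2 q u v i = a"
      proof
        assume "a = 0" then show ?thesis using z0 q1 by (intro exI[of _ 0]) simp
      next
        assume "a = 1" then show ?thesis using z1 iq by blast
      qed
    qed
  qed
  show ?thesis using sub cov card by blast
qed

theorem proposition3p1:
  fixes s q :: nat
  assumes "s \<ge> 2" and "q \<ge> 1"
  shows "(\<forall>F. F \<subseteq> zvecs s q \<and> A_covering_family s q {0, 1} F \<longrightarrow> card F \<le> 2 ^ (q - 1))
       \<and> (s = 2 \<longrightarrow> (\<exists>F. F \<subseteq> zvecs 2 q \<and> A_covering_family 2 q {0, 1} F \<and> card F = 2 ^ (q - 1)))"
  using bound[OF assms(1,2)] exist2[OF assms(2)] by blast

end
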